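(* Let $G$ be a very well-covered graph with $V(G)=X\cup Y$, $X=\{x_1,\ldots,x_h\}$ a minimal vertex cover, $Y=\{y_1,\ldots,y_h\}$ a maximal independent set, and $\{x_i,y_i\}\in E(G)$ for all $i$. Fix $i\in\{1,\ldots,h\}$ and write $N_G(x_i)\setminus X=\{y_{i_1},\ldots,y_{i_t}\}$. For $j\in\{1,\dots,h\}$ put $x_j'=y_j$ and $y_j'=x_j$ if $j\in\{i_1,\ldots,i_t\}$, and $x_j'=x_j$, $y_j'=y_j$ otherwise; let $X'=\{x_1',\ldots,x_h'\}$ and $Y'=V(G)\setminus X'=\{y_1',\dots,y_h'\}$. Let $G_1$ be $G$ with this relabelling. Then $X'$ is a minimal vertex cover of $G_1$, $Y'$ is a maximal independent set of $G_1$, $\{x_j',y_j'\}\in E(G_1)$ for all $j$, and $G_1$ with respect to the labelling $x_j',y_j'$ satisfies: (1) if $\{z_a,x_b'\},\{y_b',x_c'\}\in E(G_1)$ for distinct $a,b,c$ and $z_a\in\{x_a',y_a'\}$, then $\{z_a,x_c'\}\in E(G_1)$; (2) if $\{x_a',y_b'\}\in E(G_1)$ then $\{x_a',x_b'\}\notin E(G_1)$.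
   Context: $G$ is very well-covered if it has no isolated vertices, all minimal vertex covers have the same size, and this size is $|V(G)|/2$. $N_G(v)$ denotes the set of neighbours of $v$ in $G$. *)

theory Defs
  imports Main
begin

definition simple_graph :: "'a set \<Rightarrow> ('a \<Rightarrow> 'a \<Rightarrow> bool) \<Rightarrow> bool" where
  "simple_graph V E \<longleftrightarrow> finite V \<and> (\<forall>u v. E u v \<longrightarrow> u \<in> V \<and> v \<in> V)
     \<and> (\<forall>u v. E u v \<longrightarrow> E v u) \<and> (\<forall>u. \<not> E u u)"

definition vertex_cover :: "'a set \<Rightarrow> ('a \<Rightarrow> 'a \<Rightarrow> bool) \<Rightarrow> 'a set \<Rightarrow> bool" where
  "vertex_cover V E C \<longleftrightarrow> C \<subseteq> V \<and> (\<forall>u v. E u v \<longrightarrow> u \<in> C \<or> v \<in> C)"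

definition minimal_vertex_cover :: "'a set \<Rightarrow> ('a \<Rightarrow> 'a \<Rightarrow> bool) \<Rightarrow> 'a set \<Rightarrow> bool" where
  "minimal_vertex_cover V E C \<longleftrightarrow> vertex_cover V E C \<and> (\<forall>D. D \<subset> C \<longrightarrow> \<not> vertex_cover V E D)"

definition independent_set :: "'a set \<Rightarrow> ('a \<Rightarrow> 'a \<Rightarrow> bool) \<Rightarrow> 'a set \<Rightarrow> bool" where
  "independent_set V E S \<longleftrightarrow> S \<subseteq> V \<and> (\<forall>u\<in>S. \<forall>v\<in>S. \<not> E u v)"

definition maximal_independent_set :: "'a set \<Rightarrow> ('a \<Rightarrow> 'a \<Rightarrow> bool) \<Rightarrow> 'a set \<Rightarrow> bool" where
  "maximal_independent_set V E S \<longleftrightarrow> independent_set V E S \<and> (\<forall>T. S \<subset> T \<longrightarrow> \<not> independent_set V E T)"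

definition very_well_covered :: "'a set \<Rightarrow> ('a \<Rightarrow> 'a \<Rightarrow> bool) \<Rightarrow> bool" where
  "very_well_covered V E \<longleftrightarrow> (\<forall>v\<in>V. \<exists>u. E v u)
     \<and> (\<forall>C. minimal_vertex_cover V E C \<longrightarrow> 2 * card C = card V)"

end

theory Submission
  imports Defs
begin

lemma pair_lemma:
  fixes V :: "'a set" and E :: "'a \<Rightarrow> 'a \<Rightarrow> bool"
    and x y :: "nat \<Rightarrow> 'a" and h j :: nat
  assumes graph: "simple_graph V E"
    and vwc: "very_well_covered V E"
    and inj_x: "inj_on x {1..h}" and inj_y: "inj_on y {1..h}"
    and V_eq: "V = x ` {1..h} \<union> y ` {1..h}"
    and disj: "x ` {1..h} \<inter> y ` {1..h} = {}"
    and match: "\<forall>j\<in>{1..h}. E (x j) (y j)"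
    and IV: "I \<subseteq> V" and indep: "\<forall>u\<in>I. \<forall>v\<in>I. \<not> E u v"
    and j: "j \<in> {1..h}" and nx: "x j \<notin> I" and ny: "y j \<notin> I"
  shows "(\<forall>u\<in>I. \<not> E u (x j)) \<or> (\<forall>u\<in>I. \<not> E u (y j))"
proof -
  have finV: "finite V" using graph unfolding simple_graph_def by blast
  have sym: "\<And>u v. E u v \<Longrightarrow> E v u" and irr: "\<And>u. \<not> E u u"
    and inV: "\<And>u v. E u v \<Longrightarrow> u \<in> V \<and> v \<in> V"
    using graph unfolding simple_graph_def by blast+
  define P where "P = (\<lambda>S. I \<subseteq> S \<and> S \<subseteq> V \<and> (\<forall>u\<in>S. \<forall>v\<in>S. \<not> E u v))"
  have "P I" using IV indep by (auto simp: P_def)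
  moreover have "\<forall>S. P S \<longrightarrow> card S < card V + 1"
    using finV by (auto simp: P_def intro!: le_imp_less_Suc card_mono)
  ultimately obtain S where PS: "P S" and Smax: "\<forall>T. P T \<longrightarrow> card T \<le> card S"
    using ex_has_greatest_nat[of P I card "card V + 1"] by blast
  have SV: "S \<subseteq> V" and IS: "I \<subseteq> S" and Sind: "\<forall>u\<in>S. \<forall>v\<in>S. \<not> E u v"
    using PS by (auto simp: P_def)
  have finS: "finite S" using SV finV finite_subset by blast
  have mvc: "minimal_vertex_cover V E (V - S)"
    unfolding minimal_vertex_cover_def vertex_cover_def
  proof (intro conjI allI impI)
    fix u v assume "E u v"
    then show "u \<in> V - S \<or> v \<in> V - S" using inV Sind by blast
  next
    fix D assume D: "D \<subset> V - S"
    show "\<not> (D \<subseteq> V \<and> (\<forall>u v. E u v \<longrightarrow> u \<in> D \<or> v \<in> D))"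
    proof
      assume cov: "D \<subseteq> V \<and> (\<forall>u v. E u v \<longrightarrow> u \<in> D \<or> v \<in> D)"
      obtain w where w: "w \<in> V - S" "w \<notin> D" using D by blast
      have "P (insert w S)" unfolding P_def
      proof (intro conjI)
        show "\<forall>u\<in>insert w S. \<forall>v\<in>insert w S. \<not> E u v"
          using cov w Sind D irr by blast
      qed (use IS SV w in auto)
      then have "card (insert w S) \<le> card S" using Smax by blast
      moreover have "card (insert w S) = Suc (card S)" using finS w by simp
      ultimately show False by simp
    qed
  qed auto
  have cX: "card (x ` {1..h}) = h" using inj_x by (simp add: card_image)
  have cY: "card (y ` {1..h}) = h" using inj_y by (simp add: card_image)
  have cV: "card V = 2 * h" using V_eq disj cX cY by (simp add: card_Un_disjoint)
  have "2 * card (V - S) = card V" using vwc mvc unfolding very_well_covered_def by blast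
  then have cS: "card S = h" using cV card_Diff_subset[OF finS SV] card_mono[OF finV SV] by simp
  show ?thesis
  proof (cases "x j \<in> S \<or> y j \<in> S")
    case True
    then show ?thesis using IS Sind sym by blast
  next
    case False
    have sub: "S \<subseteq> (\<Union>k\<in>{1..h} - {j}. S \<inter> {x k, y k})"
    proof
      fix s assume s: "s \<in> S"
      then have "s \<in> V" using SV by blast
      then obtain k where k: "k \<in> {1..h}" "s = x k \<or> s = y k" using V_eq by blast
      then have "k \<noteq> j" using False s by blast
      then show "s \<in> (\<Union>k\<in>{1..h} - {j}. S \<inter> {x k, y k})" using k s by blast
    qed
    have le1: "card (S \<inter> {x k, y k}) \<le> 1" if "k \<in> {1..h}" for k
    proof -
      have "\<not> (x k \<in> S \<and> y k \<in> S)" using match that Sind by blast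
      then have "S \<inter> {x k, y k} \<subseteq> {x k} \<or> S \<inter> {x k, y k} \<subseteq> {y k}" by blast
      then show ?thesis
      proof
        assume "S \<inter> {x k, y k} \<subseteq> {x k}"
        from card_mono[OF _ this] show ?thesis by simp
      next
        assume "S \<inter> {x k, y k} \<subseteq> {y k}"
        from card_mono[OF _ this] show ?thesis by simp
      qed
    qed
    have "card S \<le> card (\<Union>k\<in>{1..h} - {j}. S \<inter> {x k, y k})"
      by (rule card_mono[OF _ sub]) auto
    also have "\<dots> \<le> (\<Sum>k\<in>{1..h} - {j}. card (S \<inter> {x k, y k}))" by (rule card_UN_le) simp
    also have "\<dots> \<le> (\<Sum>k\<in>{1..h} - {j}. 1)" by (rule sum_mono) (use le1 in auto)
    also have "\<dots> = h - 1" using j by simp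
    finally show ?thesis using cS j by simp
  qed
qed

theorem lemma3p4:
  fixes V :: "'a set" and E :: "'a \<Rightarrow> 'a \<Rightarrow> bool"
    and x y :: "nat \<Rightarrow> 'a" and h i :: nat
  assumes graph: "simple_graph V E"
    and vwc: "very_well_covered V E"
    and inj_x: "inj_on x {1..h}" and inj_y: "inj_on y {1..h}"
    and V_eq: "V = x ` {1..h} \<union> y ` {1..h}"
    and X_mvc: "minimal_vertex_cover V E (x ` {1..h})"
    and Y_mis: "maximal_independent_set V E (y ` {1..h})"
    and match: "\<forall>j\<in>{1..h}. E (x j) (y j)"
    and i: "i \<in> {1..h}"
  defines "x' \<equiv> (\<lambda>j. if j \<in> {k \<in> {1..h}. E (x i) (y k)} then y j else x j)"
    and "y' \<equiv> (\<lambda>j. if j \<in> {k \<in> {1..h}. E (x i) (y k)} then x j else y j)"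
  shows "(minimal_vertex_cover V E (x' ` {1..h}))
     \<and> (V - x' ` {1..h} = y' ` {1..h})
     \<and> (maximal_independent_set V E (V - x' ` {1..h}))
     \<and> (\<forall>j\<in>{1..h}. E (x' j) (y' j))
     \<and> (\<forall>a\<in>{1..h}. \<forall>b\<in>{1..h}. \<forall>c\<in>{1..h}. a \<noteq> b \<and> b \<noteq> c \<and> a \<noteq> c \<longrightarrow> (\<forall>z\<in>{x' a, y' a}. E z (x' b) \<and> E (y' b) (x' c) \<longrightarrow> E z (x' c)))
     \<and> (\<forall>a\<in>{1..h}. \<forall>b\<in>{1..h}. E (x' a) (y' b) \<longrightarrow> \<not> E (x' a) (x' b))"
proof -
  have finV: "finite V" using graph unfolding simple_graph_def by blast
  have sym: "\<And>u v. E u v \<Longrightarrow> E v u" and irr: "\<And>u. \<not> E u u"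
    and inV: "\<And>u v. E u v \<Longrightarrow> u \<in> V \<and> v \<in> V"
    using graph unfolding simple_graph_def by blast+
  have Yind: "\<forall>u\<in>y ` {1..h}. \<forall>v\<in>y ` {1..h}. \<not> E u v"
    using Y_mis unfolding maximal_independent_set_def independent_set_def by blast
  have disj: "x ` {1..h} \<inter> y ` {1..h} = {}"
  proof (rule ccontr)
    assume "x ` {1..h} \<inter> y ` {1..h} \<noteq> {}"
    then obtain a b where ab: "a \<in> {1..h}" "b \<in> {1..h}" "x a = y b" by blast
    then have "E (y b) (y a)" using match by metis
    then show False using Yind ab by blast
  qed
  have xy: "x a \<noteq> y b" if "a \<in> {1..h}" "b \<in> {1..h}" for a b using disj that by blast
  have yx: "y b \<noteq> x a" if "a \<in> {1..h}" "b \<in> {1..h}" for a b using disj that by blast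
  have xx: "x a = x b \<longleftrightarrow> a = b" if "a \<in> {1..h}" "b \<in> {1..h}" for a b
    using inj_x that by (meson inj_on_eq_iff)
  have yy: "y a = y b \<longleftrightarrow> a = b" if "a \<in> {1..h}" "b \<in> {1..h}" for a b
    using inj_y that by (meson inj_on_eq_iff)
  note PL = pair_lemma[OF graph vwc inj_x inj_y V_eq disj match]
  have xV: "x a \<in> V" and yV: "y a \<in> V" if "a \<in> {1..h}" for a using V_eq that by auto
  define S where "S = {k \<in> {1..h}. E (x i) (y k)}"
  have x'S: "x' = (\<lambda>j. if j \<in> S then y j else x j)" unfolding x'_def S_def by simp
  have y'S: "y' = (\<lambda>j. if j \<in> S then x j else y j)" unfolding y'_def S_def by simp
  have P2: "\<not> E (x a) (x b)" if ab: "a \<in> {1..h}" "b \<in> {1..h}" and e: "E (x a) (y b)" for a b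
  proof (cases "a = b")
    case True then show ?thesis using irr by simp
  next
    case False
    have "(\<forall>u\<in>{x a}. \<not> E u (x b)) \<or> (\<forall>u\<in>{x a}. \<not> E u (y b))"
      by (rule PL) (use ab False xx xy yx xV irr in auto)
    then show ?thesis using e by blast
  qed
  have iS: "i \<in> S" using i match unfolding S_def by blast
  have x'V: "x' a \<in> V" and y'V: "y' a \<in> V" if "a \<in> {1..h}" for a
    using xV yV that unfolding x'S y'S by auto
  have x'x': "x' a = x' b \<longleftrightarrow> a = b" if "a \<in> {1..h}" "b \<in> {1..h}" for a b
    using that xx yy xy yx unfolding x'S by (cases "a \<in> S"; cases "b \<in> S") auto
  have y'y': "y' a = y' b \<longleftrightarrow> a = b" if "a \<in> {1..h}" "b \<in> {1..h}" for a b
    using that xx yy xy yx unfolding y'S by (cases "a \<in> S"; cases "b \<in> S") auto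
  have x'y': "x' a \<noteq> y' b" if "a \<in> {1..h}" "b \<in> {1..h}" for a b
    using that xx yy xy yx unfolding x'S y'S by (cases "a \<in> S"; cases "b \<in> S") auto
  have y'x': "y' b \<noteq> x' a" if "a \<in> {1..h}" "b \<in> {1..h}" for a b
    using x'y'[OF that] by auto
  have PL': "(\<forall>u\<in>I. \<not> E u (x' b)) \<or> (\<forall>u\<in>I. \<not> E u (y' b))"
    if "I \<subseteq> V" "\<forall>u\<in>I. \<forall>v\<in>I. \<not> E u v" "b \<in> {1..h}" "x' b \<notin> I" "y' b \<notin> I" for I b
    using PL[OF that(1,2,3)] that(4,5) by (cases "b \<in> S") (auto simp: x'S y'S)
  have match': "E (x' j) (y' j)" if "j \<in> {1..h}" for j
    using match that sym unfolding x'S y'S by auto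
  have Y'ind: "\<not> E (y' k) (y' l)" if kl: "k \<in> {1..h}" "l \<in> {1..h}" for k l
  proof -
    have c1: "\<not> E (x k) (y l)" if kl: "k \<in> {1..h}" "l \<in> {1..h}" "k \<in> S" "l \<notin> S" for k l
    proof
      assume e: "E (x k) (y l)"
      have ki: "k \<noteq> i" using e that S_def by blast
      have kl': "k \<noteq> l" using that by blast
      have li: "l \<noteq> i" using that iS by blast
      have "(\<forall>u\<in>{y l, x i}. \<not> E u (x k)) \<or> (\<forall>u\<in>{y l, x i}. \<not> E u (y k))"
      proof (rule PL)
        show "\<forall>u\<in>{y l, x i}. \<forall>v\<in>{y l, x i}. \<not> E u v"
          using irr sym that S_def i by blast
      qed (use that i ki kl' xV yV xy yx xx yy in auto)
      then show False using e sym that S_def by blast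
    qed
    show ?thesis
    proof (cases "k \<in> S")
      case kS: True
      show ?thesis
      proof (cases "l \<in> S")
        case lS: True
        have "\<not> E (x k) (x l)"
        proof
          assume e: "E (x k) (x l)"
          show False
          proof (cases "k = i \<or> l = i \<or> k = l")
            case True
            then show False using e irr P2 sym kS lS S_def i by blast
          next
            case False
            have "(\<forall>u\<in>{x k, x i}. \<not> E u (x l)) \<or> (\<forall>u\<in>{x k, x i}. \<not> E u (y l))"
            proof (rule PL)
              show "\<forall>u\<in>{x k, x i}. \<forall>v\<in>{x k, x i}. \<not> E u v"
                using irr sym P2 kS S_def i by blast
            qed (use kl i False xV yV xy yx xx yy in auto)
            then show False using e lS S_def by blast
          qed
        qed
        then show ?thesis using kS lS unfolding y'S by simp
      next
        case lS: False
        then show ?thesis using c1[OF kl kS lS] kS unfolding y'S by simp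
      qed
    next
      case kS: False
      show ?thesis
      proof (cases "l \<in> S")
        case lS: True
        then show ?thesis using c1[OF kl(2,1) lS kS] kS sym unfolding y'S by auto
      next
        case lS: False
        then show ?thesis using kS Yind kl unfolding y'S by auto
      qed
    qed
  qed
  have union: "x' ` {1..h} \<union> y' ` {1..h} = V"
  proof
    show "x' ` {1..h} \<union> y' ` {1..h} \<subseteq> V" using x'V y'V by blast
    show "V \<subseteq> x' ` {1..h} \<union> y' ` {1..h}"
    proof
      fix v assume "v \<in> V"
      then obtain k where k: "k \<in> {1..h}" "v = x k \<or> v = y k" using V_eq by blast
      then have "v = x' k \<or> v = y' k" unfolding x'S y'S by auto
      then show "v \<in> x' ` {1..h} \<union> y' ` {1..h}" using k by blast
    qed
  qed
  have diff: "V - x' ` {1..h} = y' ` {1..h}"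
    using union x'y' by blast
  have mis: "maximal_independent_set V E (V - x' ` {1..h})"
    unfolding maximal_independent_set_def independent_set_def diff
  proof (intro conjI allI impI)
    show "y' ` {1..h} \<subseteq> V" using y'V by blast
    show "\<forall>u\<in>y' ` {1..h}. \<forall>v\<in>y' ` {1..h}. \<not> E u v" using Y'ind by blast
  next
    fix T assume T: "y' ` {1..h} \<subset> T"
    show "\<not> (T \<subseteq> V \<and> (\<forall>u\<in>T. \<forall>v\<in>T. \<not> E u v))"
    proof
      assume TT: "T \<subseteq> V \<and> (\<forall>u\<in>T. \<forall>v\<in>T. \<not> E u v)"
      obtain w where w: "w \<in> T" "w \<notin> y' ` {1..h}" using T by blast
      then obtain j where j: "j \<in> {1..h}" "w = x' j" using union TT by blast
      then show False using match'[OF j(1)] TT w T by blast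
    qed
  qed
  have mvc: "minimal_vertex_cover V E (x' ` {1..h})"
    unfolding minimal_vertex_cover_def vertex_cover_def
  proof (intro conjI allI impI)
    show "x' ` {1..h} \<subseteq> V" using x'V by blast
  next
    fix u v assume e: "E u v"
    show "u \<in> x' ` {1..h} \<or> v \<in> x' ` {1..h}"
    proof (rule ccontr)
      assume n: "\<not> (u \<in> x' ` {1..h} \<or> v \<in> x' ` {1..h})"
      have "u \<in> V" "v \<in> V" using inV[OF e] by auto
      then have "u \<in> V - x' ` {1..h}" "v \<in> V - x' ` {1..h}" using n by auto
      then have "u \<in> y' ` {1..h}" "v \<in> y' ` {1..h}" unfolding diff by auto
      then obtain k l where "k \<in> {1..h}" "l \<in> {1..h}" "u = y' k" "v = y' l" by blast
      then show False using e Y'ind by blast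
    qed
  next
    fix D assume D: "D \<subset> x' ` {1..h}"
    show "\<not> (D \<subseteq> V \<and> (\<forall>u v. E u v \<longrightarrow> u \<in> D \<or> v \<in> D))"
    proof
      assume cov: "D \<subseteq> V \<and> (\<forall>u v. E u v \<longrightarrow> u \<in> D \<or> v \<in> D)"
      obtain w where w: "w \<in> x' ` {1..h}" "w \<notin> D" using D by blast
      then obtain j where j: "j \<in> {1..h}" "w = x' j" by blast
      have "y' j \<notin> x' ` {1..h}" using j(1) y'x' by auto
      then have "y' j \<notin> D" using D by blast
      moreover have "E (x' j) (y' j)" using match'[OF j(1)] .
      moreover have "x' j \<notin> D" using w j by simp
      ultimately show False using conjunct2[OF cov] by blast
    qed
  qed
  have c5: "\<forall>a\<in>{1..h}. \<forall>b\<in>{1..h}. \<forall>c\<in>{1..h}. a \<noteq> b \<and> b \<noteq> c \<and> a \<noteq> c \<longrightarrow> (\<forall>z\<in>{x' a, y' a}. E z (x' b) \<and> E (y' b) (x' c) \<longrightarrow> E z (x' c))"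
  proof (intro ballI impI)
    fix a b c z
    assume abc: "a \<in> {1..h}" "b \<in> {1..h}" "c \<in> {1..h}" and d: "a \<noteq> b \<and> b \<noteq> c \<and> a \<noteq> c"
      and z: "z \<in> {x' a, y' a}" and e: "E z (x' b) \<and> E (y' b) (x' c)"
    show "E z (x' c)"
    proof (rule ccontr)
      assume ne: "\<not> E z (x' c)"
      have zV: "z \<in> V" using z abc x'V y'V by blast
      have i1: "\<forall>u\<in>{z, x' c}. \<forall>v\<in>{z, x' c}. \<not> E u v" using ne irr sym[of "x' c" z] by auto
      have "x' b \<noteq> x' a" "x' b \<noteq> y' a" "x' b \<noteq> x' c" using abc d x'x' x'y' by auto
      then have i2: "x' b \<notin> {z, x' c}" using z by auto
      have "y' b \<noteq> x' a" "y' b \<noteq> y' a" "y' b \<noteq> x' c" using abc d y'y' y'x' by auto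
      then have i3: "y' b \<notin> {z, x' c}" using z by auto
      have i0: "{z, x' c} \<subseteq> V" using zV abc x'V by auto
      have "(\<forall>u\<in>{z, x' c}. \<not> E u (x' b)) \<or> (\<forall>u\<in>{z, x' c}. \<not> E u (y' b))"
        by (rule PL'[OF i0 i1 abc(2) i2 i3])
      moreover have "E (x' c) (y' b)" using e sym by blast
      ultimately show False using e by blast
    qed
  qed
  have c6: "\<forall>a\<in>{1..h}. \<forall>b\<in>{1..h}. E (x' a) (y' b) \<longrightarrow> \<not> E (x' a) (x' b)"
  proof (intro ballI impI)
    fix a b assume ab: "a \<in> {1..h}" "b \<in> {1..h}" and e: "E (x' a) (y' b)"
    show "\<not> E (x' a) (x' b)"
    proof (cases "a = b")
      case True then show ?thesis using irr by simp
    next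
      case False
      have "(\<forall>u\<in>{x' a}. \<not> E u (x' b)) \<or> (\<forall>u\<in>{x' a}. \<not> E u (y' b))"
        by (rule PL') (use ab False x'x' x'y' y'x' x'V irr in auto)
      then show ?thesis using e by blast
    qed
  qed
  show ?thesis using mvc diff mis match' c5 c6 by blast
qed

end
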